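(* Let $\mathbb{F}$ be a field, let $n \geq 3$, and let $a,b,c \in \{-1,1\}$ (elements of $\mathbb{F}$). Let $A=(A_{i,j})$ be the $n\times n$ matrix over $\mathbb{F}$ whose entries are: $A_{1,2} = -c$ and $A_{2,1} = c$; $A_{n-1,n} = b$ and $A_{n,n-1} = a$; $A_{i,i+2} = -1$ and $A_{i+2,i} = 1$ for all $1 \leq i \leq n-2$; and all other entries equal to $0$. (For example, for $n=3$ and $n=4$ this gives $A=\begin{pmatrix} 0 & -c & -1 \\ c & 0 & b \\ 1 & a & 0\end{pmatrix}$ and $A=\begin{pmatrix} 0 & -c & -1 & 0 \\ c & 0 & 0 & -1 \\ 1 & 0 & 0 & b \\ 0 & 1 & a & 0\end{pmatrix}$, respectively.) If the rank of $A$ is even, then $a = -b$ (i.e., $A$ is skew-symmetric).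
   Context: An $n\times n$ matrix $A$ over a field is skew-symmetric if $A^T = -A$ and every diagonal entry of $A$ is zero. *)

theory Defs
  imports "Jordan_Normal_Form.DL_Rank"
begin

text \<open>The n x n matrix A of the statement. Jordan_Normal_Form matrices are
  0-indexed; we write i' = i+1, j' = j+1 for the 1-based indices of the paper.\<close>
definition A_mat :: "nat \<Rightarrow> 'a \<Rightarrow> 'a \<Rightarrow> 'a \<Rightarrow> 'a::field mat" where
  "A_mat n a b c = mat n n (\<lambda>(i, j).
     (let i' = i + 1; j' = j + 1 in
      if i' = 1 \<and> j' = 2 then - c
      else if i' = 2 \<and> j' = 1 then c
      else if i' = n - 1 \<and> j' = n then b
      else if i' = n \<and> j' = n - 1 then a
      else if j' = i' + 2 then - 1
      else if i' = j' + 2 then 1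
      else 0))"

end

theory Submission
  imports Defs
begin

lemma lt4: "(x::nat) < 4 \<Longrightarrow> x = 0 \<or> x = 1 \<or> x = 2 \<or> x = 3" by arith

lemma mod4I: "x = 4*q + r \<Longrightarrow> r < 4 \<Longrightarrow> x mod 4 = (r::nat)" by simp

lemma A_entry_m:
  assumes "i < m+3" "j < m+3"
  shows "A_mat (m+3) a b c $$ (i,j) =
    (if j = 1 \<and> i = 0 then -c else 0) +
    (if j = 0 \<and> i = 1 then c else 0) +
    (if j = m+2 \<and> i = m+1 then b else 0) +
    (if j = m+1 \<and> i = m+2 then a else 0) +
    (if j = i+2 then -1 else 0) +
    (if i = j+2 then 1 else 0)"
  unfolding A_mat_def using assms by (simp add: Let_def)

lemma A_carrier: "A_mat n a b c \<in> carrier_mat n n"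
  unfolding A_mat_def by (rule mat_carrier)

lemma A_dim_row[simp]: "dim_row (A_mat n a b c) = n"
  unfolding A_mat_def by (simp only: dim_row_mat)

lemma A_dim_col[simp]: "dim_col (A_mat n a b c) = n"
  unfolding A_mat_def by (simp only: dim_col_mat)

lemma if_and_mult: "(if P \<and> Q then x else 0) * (y::'a::field) = (if P then (if Q then x else 0) * y else 0)"
  by simp
lemma if_simple_mult: "(if P then x else 0) * (y::'a::field) = (if P then x * y else 0)"
  by simp
lemma if_sub2_mult: "(if (i::nat) = j+2 then 1 else 0) * (y::'a::field) = (if j = i-2 then (if 2 \<le> i then 1 else 0) * y else 0)"
  by auto

lemma A_row_m:
  assumes "i < m+3" "dim_vec v = m+3"
  shows "(A_mat (m+3) a b c *\<^sub>v v) $ i =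
    (if i = 0 then - c * v$1 else 0) + (if i = 1 then c * v$0 else 0) +
    (if i = m+1 then b * v$(m+2) else 0) + (if i = m+2 then a * v$(m+1) else 0) +
    (if i+2 < m+3 then - v$(i+2) else 0) + (if 2 \<le> i then v$(i-2) else 0)"
proof -
  let ?S = "\<lambda>k x. (\<Sum>j\<in>{0..<m+3}. (if j = k then x * v$j else 0))"
  have "(A_mat (m+3) a b c *\<^sub>v v) $ i = (\<Sum>j\<in>{0..<m+3}. A_mat (m+3) a b c $$ (i,j) * v$j)"
    using assms by (simp add: A_mat_def scalar_prod_def)
  also have "\<dots> = ?S 1 (if i = 0 then -c else 0) + ?S 0 (if i = 1 then c else 0)
     + ?S (m+2) (if i = m+1 then b else 0) + ?S (m+1) (if i = m+2 then a else 0)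
     + ?S (i+2) (-1) + ?S (i-2) (if 2 \<le> i then 1 else 0)"
    unfolding sum.distrib[symmetric]
  proof (rule sum.cong[OF refl])
    fix j assume "j \<in> {0..<m+3}"
    then have j: "j < m+3" by simp
    show "A_mat (m+3) a b c $$ (i,j) * v$j = 
    (if j = 1 then (if i = 0 then -c else 0) * v$j else 0) +
    (if j = 0 then (if i = 1 then c else 0) * v$j else 0) +
    (if j = m+2 then (if i = m+1 then b else 0) * v$j else 0) +
    (if j = m+1 then (if i = m+2 then a else 0) * v$j else 0) +
    (if j = i+2 then -1 * v$j else 0) +
    (if j = i-2 then (if 2 \<le> i then 1 else 0) * v$j else 0)"
      unfolding A_entry_m[OF assms(1) j] distrib_right if_and_mult if_sub2_mult
      by (simp only: if_simple_mult)
  qed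
  also have "\<dots> = (if i = 0 then - c * v$1 else 0) + (if i = 1 then c * v$0 else 0) +
    (if i = m+1 then b * v$(m+2) else 0) + (if i = m+2 then a * v$(m+1) else 0) +
    (if i+2 < m+3 then - v$(i+2) else 0) + (if 2 \<le> i then v$(i-2) else 0)"
    using assms by (simp add: sum.delta, arith)
  finally show ?thesis .
qed

lemma two_zero: "(2::'a::field) \<noteq> 0 \<Longrightarrow> x + x = 0 \<Longrightarrow> (x::'a) = 0"
  by (metis mult_2 mult_eq_0_iff)

lemma sq1: fixes c x :: "'a::field" shows "c * c = 1 \<Longrightarrow> c * (c * x) = x"
  by (metis mult.assoc mult_1)

lemma hA: fixes a b c p r q s :: "'a::field"
  assumes R0: "-c*r - q = 0" and R1: "c*p - s = 0" and F1: "b*s + p + p + r = 0" and F2: "a*q + r + p + r = 0"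
    and ab: "a = b" and bc: "b = c" and cc: "c*c = 1" and two: "(2::'a) \<noteq> 0"
  shows "p = 0 \<and> r = 0"
proof -
  have q: "q = -c*r" using R0 by simp
  have s: "s = c*p" using R1 by simp
  have e1: "p + p + p + r = 0" using F1 unfolding s bc by (simp add: sq1[OF cc])
  have e2: "p + r = 0" using F2 unfolding q ab bc by (simp add: sq1[OF cc])
  have "p + p = (p + p + p + r) - (p + r)" by (simp add: algebra_simps)
  then have "p + p = 0" using e1 e2 by (simp only: e1 e2 diff_zero)
  then have p: "p = 0" using two two_zero by blast
  then show ?thesis using e2 by simp
qed

lemma hB: fixes a b c p r q s :: "'a::field"
  assumes R0: "-c*r - q = 0" and R1: "c*p - s = 0" and F1: "b*s + p + p + r = 0" and F2: "a*q + r + p + r = 0"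
    and ab: "a = b" and bc: "b = -c" and cc: "c*c = 1" and two: "(2::'a) \<noteq> 0"
  shows "p = 0 \<and> r = 0"
proof -
  have q: "q = -c*r" using R0 by simp
  have s: "s = c*p" using R1 by simp
  have e1: "p + r = 0" using F1 unfolding s bc by (simp add: sq1[OF cc])
  have e2: "r + r + r + p = 0" using F2 unfolding q ab bc by (simp add: sq1[OF cc] algebra_simps)
  have "r + r = (r + r + r + p) - (p + r)" by (simp add: algebra_simps)
  then have "r + r = 0" using e1 e2 by (simp only: e1 e2 diff_zero)
  then have r: "r = 0" using two two_zero by blast
  then show ?thesis using e1 by simp
qed

lemma hC: fixes a b c p r q s :: "'a::field"
  assumes R0: "-c*r - q = 0" and R1: "c*p - s = 0" and F1: "b*r + q + p + r = 0" and F2: "a*p + s + p + r = 0"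
    and ab: "a = b" and bc: "b = c" and cc: "c*c = 1" and two: "(2::'a) \<noteq> 0"
  shows "p = 0 \<and> r = 0"
proof -
  have q: "q = -c*r" using R0 by simp
  have s: "s = c*p" using R1 by simp
  have e1: "p + r = 0" using F1 unfolding q bc by (simp add: algebra_simps)
  have e2: "c*p + c*p + p + r = 0" using F2 unfolding s ab bc by (simp add: algebra_simps)
  have "c*p + c*p = (c*p + c*p + p + r) - (p + r)" by (simp add: algebra_simps)
  then have "c*p + c*p = 0" using e1 e2 by (simp only: e1 e2 diff_zero)
  then have "c*p = 0" using two two_zero by blast
  then have p: "p = 0" using cc by (metis mult_zero_right sq1)
  then show ?thesis using e1 by simp
qed

lemma hD: fixes a b c p r q s :: "'a::field"
  assumes R0: "-c*r - q = 0" and R1: "c*p - s = 0" and F1: "b*r + q + p + r = 0" and F2: "a*p + s + p + r = 0"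
    and ab: "a = b" and bc: "b = -c" and cc: "c*c = 1" and two: "(2::'a) \<noteq> 0"
  shows "p = 0 \<and> r = 0"
proof -
  have q: "q = -c*r" using R0 by simp
  have s: "s = c*p" using R1 by simp
  have e2: "p + r = 0" using F2 unfolding s ab bc by (simp add: algebra_simps)
  have e1: "-(c*r) - c*r + p + r = 0" using F1 unfolding q bc by (simp add: algebra_simps)
  have "c*r + c*r = (p + r) - (-(c*r) - c*r + p + r)" by (simp add: algebra_simps)
  then have "c*r + c*r = 0" using e1 e2 by (simp only: e1 e2 diff_zero)
  then have "c*r = 0" using two two_zero by blast
  then have r: "r = 0" using cc by (metis mult_zero_right sq1)
  then show ?thesis using e2 by simp
qed


lemma kernel_basic:
  fixes v :: "'a::field vec"
  assumes dv: "dim_vec v = m+3"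
    and rows: "\<And>i. i \<le> m \<Longrightarrow> (A_mat (m+3) a b c *\<^sub>v v) $ i = 0"
  shows "- c * v$1 - v$2 = 0" "m \<ge> 1 \<Longrightarrow> c * v$0 - v$3 = 0"
    "\<And>k. k < m+3 \<Longrightarrow> v$k = v$(k mod 4)"
proof -
  show "- c * v$1 - v$2 = 0" using rows[of 0] A_row_m[of 0 m v a b c] dv by (simp add: numeral_2_eq_2)
  show "m \<ge> 1 \<Longrightarrow> c * v$0 - v$3 = 0" using rows[of 1] A_row_m[of 1 m v a b c] dv by (simp add: numeral_3_eq_3)
  have per: "v$(k+4) = v$k" if "k+4 < m+3" for k
    using rows[of "k+2"] A_row_m[of "k+2" m v a b c] dv that by (simp add: eval_nat_numeral)
  show "v$k = v$(k mod 4)" if "k < m+3" for k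
    using that
  proof (induction k rule: less_induct)
    case (less k)
    show ?case
    proof (cases "k < 4")
      case True then show ?thesis by simp
    next
      case False
      then have k: "k = (k-4)+4" by simp
      have "v$k = v$(k-4)" using per[of "k-4"] less.prems k by simp
      also have "\<dots> = v$((k-4) mod 4)" using less.IH[of "k-4"] less.prems False by simp
      also have "(k-4) mod 4 = k mod 4" using k by (metis mod_add_self2)
      finally show ?thesis by simp
    qed
  qed
qed

lemma rows_end:
  assumes "dim_vec v = m+3" "m \<ge> 1"
  shows "(A_mat (m+3) a b c *\<^sub>v v) $ (m+1) = b * v$(m+2) + v$(m-1)"
    "(A_mat (m+3) a b c *\<^sub>v v) $ (m+2) = a * v$(m+1) + v$m"
  using A_row_m[of "m+1" m v a b c] A_row_m[of "m+2" m v a b c] assms by auto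


lemma alg0: fixes a b c x y z :: "'a::field"
  assumes h1: "- c * x - z = 0" and h2: "c * y + b * z = 0" and h3: "a * x + y = 0" and ab: "a = b"
  shows "a * c * x + a * c * x = 0"
proof -
  have z: "z = - c * x" using h1 by simp
  have y: "y = - a * x" using h3 by (simp add: algebra_simps eq_neg_iff_add_eq_0)
  have "a*c*x + a*c*x = - (c*y + b*z)" unfolding z y ab by (simp add: algebra_simps)
  then show ?thesis using h2 by simp
qed
lemma alg1: fixes a b c p r q s :: "'a::field"
  assumes h1: "- c * r - q = 0" and h2: "c * p - s = 0" and h3: "b * p + r = 0" and h4: "a * s + q = 0" and ab: "a = b"
  shows "a * c * p + a * c * p = 0"
proof -
  have q: "q = - c * r" using h1 by simp
  have s: "s = c * p" using h2 by simp
  have r: "r = - b * p" using h3 by (simp add: algebra_simps eq_neg_iff_add_eq_0)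
  have "a*c*p + a*c*p = a * s + q" unfolding q s r ab by (simp add: algebra_simps)
  then show ?thesis using h4 by simp
qed
lemma alg2: fixes a b c p r q s :: "'a::field"
  assumes h1: "- c * r - q = 0" and h2: "c * p - s = 0" and h3: "b * q + s = 0" and h4: "a * r + p = 0" and ab: "a = b"
  shows "a * c * r + a * c * r = 0"
proof -
  have q: "q = - c * r" using h1 by simp
  have s: "s = c * p" using h2 by simp
  have p: "p = - a * r" using h4 by (simp add: algebra_simps eq_neg_iff_add_eq_0)
  have "a*c*r + a*c*r = - (b * q + s)" unfolding q s p ab by (simp add: algebra_simps)
  then show ?thesis using h3 by simp
qed
lemma alg_inv: fixes a c x :: "'a::field"
  shows "a * a = 1 \<Longrightarrow> c * c = 1 \<Longrightarrow> x = a * c * (a * c * x)"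
  by (metis mult.assoc mult.commute mult.left_neutral)

lemma odd_kernel:
  fixes v :: "'a::field vec"
  assumes m: "even m" and ab: "a = b" and aa: "a*a = 1" and cc: "c*c = 1" and two: "(2::'a) \<noteq> 0"
    and dv: "dim_vec v = m+3" and ker: "A_mat (m+3) a b c *\<^sub>v v = 0\<^sub>v (m+3)"
  shows "v = 0\<^sub>v (m+3)"
proof -
  have rows: "\<And>i. i < m+3 \<Longrightarrow> (A_mat (m+3) a b c *\<^sub>v v) $ i = 0" using ker by simp
  have rows': "\<And>i. i \<le> m \<Longrightarrow> (A_mat (m+3) a b c *\<^sub>v v) $ i = 0" using rows by simp
  note kb = kernel_basic[OF dv rows']
  have small: "v$0 = 0 \<and> v$1 = 0 \<and> v$2 = 0 \<and> (m \<ge> 1 \<longrightarrow> v$3 = 0)"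
  proof (cases "m = 0")
    case True
    have E1: "-c * v$1 - v$2 = 0" by (rule kb(1))
    have E2: "c * v$0 + b * v$2 = 0" using rows[of 1] A_row_m[of 1 m v a b c] dv True by (simp add: eval_nat_numeral)
    have E3: "a * v$1 + v$0 = 0" using rows[of 2] A_row_m[of 2 m v a b c] dv True by (simp add: eval_nat_numeral)
    have "a*c*v$1 + a*c*v$1 = 0" using E1 E2 E3 ab by (rule alg0)
    then have "a*c*v$1 = 0" using two two_zero by blast
    moreover have "v$1 = a*c*(a*c*v$1)" using aa cc by (rule alg_inv)
    ultimately have z1: "v$1 = 0" by (metis mult_zero_right)
    then have "v$2 = 0" "v$0 = 0" using E1 E3 by auto
    then show ?thesis using z1 True by simp
  next
    case False
    then have m1: "m \<ge> 1" by simp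
    have R0: "-c * v$1 - v$2 = 0" by (rule kb(1))
    have R1: "c * v$0 - v$3 = 0" using rows[of 1] A_row_m[of 1 m v a b c] dv m1 by (simp add: numeral_3_eq_3)
    have Rm1: "b * v$(m+2) + v$(m-1) = 0" using rows[of "m+1"] rows_end[OF dv m1, of a b c] by simp
    have Rm2: "a * v$(m+1) + v$m = 0" using rows[of "m+2"] rows_end[OF dv m1, of a b c] by simp
    have "\<exists>t. m = 4*t+2 \<or> m = 4*t+4" using m False by presburger
    then obtain t where t: "m = 4*t+2 \<or> m = 4*t+4" by blast
    then show ?thesis
    proof
      assume mt: "m = 4*t+2"
      have md1: "(m+2) mod 4 = 0" by (rule mod4I[of _ "t+1"]) (simp_all add: mt algebra_simps)
      have md2: "(m-1) mod 4 = 1" by (rule mod4I[of _ "t"]) (simp_all add: mt algebra_simps)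
      have md3: "(m+1) mod 4 = 3" by (rule mod4I[of _ "t"]) (simp_all add: mt algebra_simps)
      have md4: "(m) mod 4 = 2" by (rule mod4I[of _ "t"]) (simp_all add: mt algebra_simps)
      note md = md1 md2 md3 md4
      have "v$(m+2) = v$0" "v$(m-1) = v$1" "v$(m+1) = v$3" "v$m = v$2"
        using kb(3)[of "m+2"] kb(3)[of "m-1"] kb(3)[of "m+1"] kb(3)[of m] md m1 by simp_all
      then have F1: "b * v$0 + v$1 = 0" and F2: "a * v$3 + v$2 = 0" using Rm1 Rm2 by simp_all
      have "a*c*v$0 + a*c*v$0 = 0" using R0 R1 F1 F2 ab by (rule alg1)
      then have "a*c*v$0 = 0" using two two_zero by blast
      moreover have "v$0 = a*c*(a*c*v$0)" using aa cc by (rule alg_inv)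
      ultimately have z0: "v$0 = 0" by (metis mult_zero_right)
      then have "v$1 = 0" using F1 by simp
      then show ?thesis using z0 R0 R1 by simp
    next
      assume mt: "m = 4*t+4"
      have md1: "(m+2) mod 4 = 2" by (rule mod4I[of _ "t+1"]) (simp_all add: mt algebra_simps)
      have md2: "(m-1) mod 4 = 3" by (rule mod4I[of _ "t"]) (simp_all add: mt algebra_simps)
      have md3: "(m+1) mod 4 = 1" by (rule mod4I[of _ "t+1"]) (simp_all add: mt algebra_simps)
      have md4: "(m) mod 4 = 0" by (rule mod4I[of _ "t+1"]) (simp_all add: mt algebra_simps)
      note md = md1 md2 md3 md4
      have "v$(m+2) = v$2" "v$(m-1) = v$3" "v$(m+1) = v$1" "v$m = v$0"
        using kb(3)[of "m+2"] kb(3)[of "m-1"] kb(3)[of "m+1"] kb(3)[of m] md m1 by simp_all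
      then have F1: "b * v$2 + v$3 = 0" and F2: "a * v$1 + v$0 = 0" using Rm1 Rm2 by simp_all
      have "a*c*v$1 + a*c*v$1 = 0" using R0 R1 F1 F2 ab by (rule alg2)
      then have "a*c*v$1 = 0" using two two_zero by blast
      moreover have "v$1 = a*c*(a*c*v$1)" using aa cc by (rule alg_inv)
      ultimately have z1: "v$1 = 0" by (metis mult_zero_right)
      then have "v$0 = 0" using F2 by simp
      then show ?thesis using z1 R0 R1 by simp
    qed
  qed
  show ?thesis
  proof (rule eq_vecI)
    show "dim_vec v = dim_vec (0\<^sub>v (m+3))" using dv by simp
    fix k assume "k < dim_vec (0\<^sub>v (m+3))"
    then have k: "k < m+3" by simp
    have le: "k mod 4 \<le> k" by simp
    have "k mod 4 < 4" by simp
    then have cs: "k mod 4 = 0 \<or> k mod 4 = 1 \<or> k mod 4 = 2 \<or> k mod 4 = 3" by (rule lt4)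
    have "v$(k mod 4) = 0"
    proof -
      { assume "k mod 4 = 3"
        then have "m \<ge> 1" using le k by linarith
        then have ?thesis using small \<open>k mod 4 = 3\<close> by simp }
      then show ?thesis using cs small by auto
    qed
    then show "v$k = 0\<^sub>v (m+3) $ k" using kb(3)[of k] k by simp
  qed
qed


lemma rows_begin:
  fixes v :: "'a::field vec"
  assumes dv: "dim_vec v = m+3"
  shows "(A_mat (m+3) a b c *\<^sub>v v) $ 0 = - c * v$1 - v$2"
    "m \<ge> 1 \<Longrightarrow> (A_mat (m+3) a b c *\<^sub>v v) $ 1 = c * v$0 - v$3"
    "2 \<le> i \<Longrightarrow> i \<le> m \<Longrightarrow> (A_mat (m+3) a b c *\<^sub>v v) $ i = v$(i-2) - v$(i+2)"
proof -
  show "(A_mat (m+3) a b c *\<^sub>v v) $ 0 = - c * v$1 - v$2"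
    using A_row_m[of 0 m v a b c] dv by (simp add: numeral_2_eq_2)
  show "m \<ge> 1 \<Longrightarrow> (A_mat (m+3) a b c *\<^sub>v v) $ 1 = c * v$0 - v$3"
    using A_row_m[of 1 m v a b c] dv by (simp add: numeral_3_eq_3)
  show "2 \<le> i \<Longrightarrow> i \<le> m \<Longrightarrow> (A_mat (m+3) a b c *\<^sub>v v) $ i = v$(i-2) - v$(i+2)"
    using A_row_m[of i m v a b c] dv by simp
qed

lemma mod_shift4: "(k::nat) \<ge> 2 \<Longrightarrow> (k+2) mod 4 = (k-2) mod 4"
proof -
  assume "k \<ge> 2" then have "k+2 = (k-2)+4" by simp
  then show ?thesis by (metis mod_add_self2)
qed

lemma even_det_zero:
  fixes a b c :: "'a::field"
  assumes m: "odd m" and ab: "a = b" and bc: "b = c \<or> b = -c" and cc: "c*c = 1"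
  shows "det (A_mat (m+3) a b c) = 0"
proof -
  define V where "V = (\<lambda>k::nat. if b = c then (if k mod 4 = 1 then 1 else if k mod 4 = 2 then -c else 0)
     else (if k mod 4 = 0 then 1 else if k mod 4 = 3 then c else (0::'a)))"
  have Vm: "\<And>k. V k = V (k mod 4)" unfolding V_def by simp
  have V0: "V 0 = (if b = c then 0 else 1)" and V1: "V 1 = (if b = c then 1 else 0)"
    and V2: "V 2 = (if b = c then -c else 0)" and V3: "V 3 = (if b = c then 0 else c)"
    unfolding V_def by simp_all
  define v where "v = vec (m+3) V"
  have dv: "dim_vec v = m+3" unfolding v_def by simp
  have vi: "\<And>k. k < m+3 \<Longrightarrow> v$k = V k" unfolding v_def by simp
  have m1: "m \<ge> 1"
  proof (rule ccontr)
    assume "\<not> m \<ge> 1" then have "m = 0" by simp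
    then show False using m by simp
  qed
  have "\<exists>t. m = 4*t+1 \<or> m = 4*t+3" using m by presburger
  then obtain t where t: "m = 4*t+1 \<or> m = 4*t+3" by blast
  have ends: "b * V (m+2) + V (m-1) = 0 \<and> a * V (m+1) + V m = 0"
    using t
  proof
    assume mt: "m = 4*t+1"
    have md1: "(m+2) mod 4 = 3" by (rule mod4I[of _ "t"]) (simp_all add: mt algebra_simps)
    have md2: "(m-1) mod 4 = 0" by (rule mod4I[of _ "t"]) (simp_all add: mt algebra_simps)
    have md3: "(m+1) mod 4 = 2" by (rule mod4I[of _ "t"]) (simp_all add: mt algebra_simps)
    have md4: "(m) mod 4 = 1" by (rule mod4I[of _ "t"]) (simp_all add: mt algebra_simps)
    have "V (m+2) = V 3" "V (m-1) = V 0" "V (m+1) = V 2" "V m = V 1"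
      using Vm[of "m+2"] Vm[of "m-1"] Vm[of "m+1"] Vm[of m] md1 md2 md3 md4 by simp_all
    then show ?thesis unfolding V0 V1 V2 V3 using ab bc cc by auto
  next
    assume mt: "m = 4*t+3"
    have md1: "(m+2) mod 4 = 1" by (rule mod4I[of _ "t+1"]) (simp_all add: mt algebra_simps)
    have md2: "(m-1) mod 4 = 2" by (rule mod4I[of _ "t"]) (simp_all add: mt algebra_simps)
    have md3: "(m+1) mod 4 = 0" by (rule mod4I[of _ "t+1"]) (simp_all add: mt algebra_simps)
    have md4: "(m) mod 4 = 3" by (rule mod4I[of _ "t"]) (simp_all add: mt algebra_simps)
    have "V (m+2) = V 1" "V (m-1) = V 2" "V (m+1) = V 0" "V m = V 3"
      using Vm[of "m+2"] Vm[of "m-1"] Vm[of "m+1"] Vm[of m] md1 md2 md3 md4 by simp_all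
    then show ?thesis unfolding V0 V1 V2 V3 using ab bc cc by auto
  qed
  have ker: "A_mat (m+3) a b c *\<^sub>v v = 0\<^sub>v (m+3)"
  proof (rule eq_vecI)
    show "dim_vec (A_mat (m+3) a b c *\<^sub>v v) = dim_vec (0\<^sub>v (m+3))" by simp
    fix i assume "i < dim_vec (0\<^sub>v (m+3))"
    then have i: "i < m+3" by simp
    have "(A_mat (m+3) a b c *\<^sub>v v) $ i = 0"
    proof -
      consider "i = 0" | "i = 1" | "i = m+1" | "i = m+2" | "2 \<le> i \<and> i \<le> m" using i m1 by linarith
      then show ?thesis
      proof cases
        case 1
        then show ?thesis using rows_begin(1)[OF dv, of a b c] vi[of 1] vi[of 2] V1 V2 by auto
      next
        case 2
        have "3 < m+3" using m1 by simp
        then show ?thesis using 2 rows_begin(2)[OF dv m1, of a b c] vi[of 0] vi[of 3] V0 V3 by auto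
      next
        case 3
        then show ?thesis using rows_end(1)[OF dv m1, of a b c] vi[of "m+2"] vi[of "m-1"] ends by simp
      next
        case 4
        then show ?thesis using rows_end(2)[OF dv m1, of a b c] vi[of "m+1"] vi[of m] ends by simp
      next
        case 5
        then have "V (i+2) = V (i-2)" using Vm[of "i+2"] Vm[of "i-2"] mod_shift4[of i] by simp
        moreover have "i - 2 < m + 3" using i by simp
        ultimately show ?thesis using 5 rows_begin(3)[OF dv, of i a b c] vi[of "i+2"] vi[of "i-2"] by simp
      qed
    qed
    then show "(A_mat (m+3) a b c *\<^sub>v v) $ i = 0\<^sub>v (m+3) $ i" using i by simp
  qed
  have nz: "v \<noteq> 0\<^sub>v (m+3)"
  proof
    assume "v = 0\<^sub>v (m+3)"
    then have "v$0 = 0" "v$1 = 0" by simp_all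
    then have "V 0 = 0" "V 1 = 0" using vi[of 0] vi[of 1] by simp_all
    then show False unfolding V0 V1 by (cases "b = c") simp_all
  qed
  have vc: "v \<in> carrier_vec (m+3)" using dv by (rule carrier_vecI)
  have car: "A_mat (m+3) a b c \<in> carrier_mat (m+3) (m+3)" by (rule A_carrier)
  have ex: "\<exists>w. w \<in> carrier_vec (m+3) \<and> w \<noteq> 0\<^sub>v (m+3) \<and> A_mat (m+3) a b c *\<^sub>v w = 0\<^sub>v (m+3)"
    using vc nz ker by blast
  show ?thesis using det_0_iff_vec_prod_zero_field[OF car] ex by (rule iffD2)
qed

definition Emat :: "nat \<Rightarrow> 'a::field mat" where
  "Emat m = mat (m+3) (m+3) (\<lambda>(i,j). (if i = m+1 \<or> i = m+2 then 1 else 0) * (if j = 0 \<or> j = 1 then 1 else 0))"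

lemma Emat_carrier: "Emat m \<in> carrier_mat (m+3) (m+3)" by (simp add: Emat_def)

lemma E_row:
  fixes v :: "'a::field vec"
  assumes dv: "dim_vec v = m+3" and i: "i < m+3"
  shows "(Emat m *\<^sub>v v) $ i = (if i = m+1 \<or> i = m+2 then v$0 + v$1 else 0)"
proof -
  let ?f = "(if i = m+1 \<or> i = m+2 then 1 else 0) :: 'a"
  have "(Emat m *\<^sub>v v) $ i = (\<Sum>j\<in>{0..<m+3}. Emat m $$ (i,j) * v$j)"
    using assms by (simp add: Emat_def scalar_prod_def)
  also have "\<dots> = (\<Sum>j\<in>{0..<m+3}. (if j = 0 then ?f * v$j else 0) + (if j = 1 then ?f * v$j else 0))"
    by (rule sum.cong[OF refl]) (auto simp: Emat_def i)
  also have "\<dots> = ?f * v$0 + ?f * v$1"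
    by (simp add: sum.distrib sum.delta)
  finally show ?thesis by simp
qed

lemma even_pert:
  fixes a b c :: "'a::field"
  assumes m: "odd m" and ab: "a = b" and bc: "b = c \<or> b = -c" and cc: "c*c = 1" and two: "(2::'a) \<noteq> 0"
  shows "det (A_mat (m+3) a b c + Emat m) \<noteq> 0"
proof
  assume d0: "det (A_mat (m+3) a b c + Emat m) = 0"
  have car: "A_mat (m+3) a b c + Emat m \<in> carrier_mat (m+3) (m+3)"
    using Emat_carrier by (rule add_carrier_mat)
  have "\<exists>w. w \<in> carrier_vec (m+3) \<and> w \<noteq> 0\<^sub>v (m+3) \<and> (A_mat (m+3) a b c + Emat m) *\<^sub>v w = 0\<^sub>v (m+3)"
    using det_0_iff_vec_prod_zero_field[OF car] d0 by (rule iffD1)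
  then obtain v where v: "v \<in> carrier_vec (m+3)" "v \<noteq> 0\<^sub>v (m+3)"
    "(A_mat (m+3) a b c + Emat m) *\<^sub>v v = 0\<^sub>v (m+3)"
    by blast
  have dv: "dim_vec v = m+3" using v(1) by simp
  have Acar: "A_mat (m+3) a b c \<in> carrier_mat (m+3) (m+3)" by (rule A_carrier)
  have sum0: "A_mat (m+3) a b c *\<^sub>v v + Emat m *\<^sub>v v = 0\<^sub>v (m+3)"
    using v(3) add_mult_distrib_mat_vec[OF Acar Emat_carrier v(1)] by simp
  have rowsum: "(A_mat (m+3) a b c *\<^sub>v v) $ i + (Emat m *\<^sub>v v) $ i = 0" if "i < m+3" for i
  proof -
    have "(A_mat (m+3) a b c *\<^sub>v v + Emat m *\<^sub>v v) $ i = 0" using sum0 that by simp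
    then show ?thesis using that by (simp add: Emat_def)
  qed
  have rows': "(A_mat (m+3) a b c *\<^sub>v v) $ i = 0" if i: "i \<le> m" for i
  proof -
    have "(Emat m *\<^sub>v v) $ i = 0" using E_row[OF dv, of i] i by simp
    then show ?thesis using rowsum[of i] i by simp
  qed
  note kb = kernel_basic[OF dv rows']
  have m1: "m \<ge> 1"
  proof (rule ccontr)
    assume "\<not> m \<ge> 1" then have "m = 0" by simp
    then show False using m by simp
  qed
  have R0: "-c * v$1 - v$2 = 0" by (rule kb(1))
  have R1: "c * v$0 - v$3 = 0" using rows'[of 1] A_row_m[of 1 m v a b c] dv m1 by (simp add: numeral_3_eq_3)
  have G1: "b * v$(m+2) + v$(m-1) + v$0 + v$1 = 0"
    using rowsum[of "m+1"] rows_end(1)[OF dv m1, of a b c] E_row[OF dv, of "m+1"] by (simp add: add.assoc)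
  have G2: "a * v$(m+1) + v$m + v$0 + v$1 = 0"
    using rowsum[of "m+2"] rows_end(2)[OF dv m1, of a b c] E_row[OF dv, of "m+2"] by (simp add: add.assoc)
  have "\<exists>t. m = 4*t+1 \<or> m = 4*t+3" using m by presburger
  then obtain t where t: "m = 4*t+1 \<or> m = 4*t+3" by blast
  have pr: "v$0 = 0 \<and> v$1 = 0"
    using t
  proof
    assume mt: "m = 4*t+1"
    have md1: "(m+2) mod 4 = 3" by (rule mod4I[of _ "t"]) (simp_all add: mt algebra_simps)
    have md2: "(m-1) mod 4 = 0" by (rule mod4I[of _ "t"]) (simp_all add: mt algebra_simps)
    have md3: "(m+1) mod 4 = 2" by (rule mod4I[of _ "t"]) (simp_all add: mt algebra_simps)
    have md4: "(m) mod 4 = 1" by (rule mod4I[of _ "t"]) (simp_all add: mt algebra_simps)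
    have "v$(m+2) = v$3" "v$(m-1) = v$0" "v$(m+1) = v$2" "v$m = v$1"
      using kb(3)[of "m+2"] kb(3)[of "m-1"] kb(3)[of "m+1"] kb(3)[of m] md1 md2 md3 md4 m1 by simp_all
    then have F1: "b * v$3 + v$0 + v$0 + v$1 = 0" and F2: "a * v$2 + v$1 + v$0 + v$1 = 0"
      using G1 G2 by simp_all
    show ?thesis using bc
    proof
      assume "b = c" then show ?thesis using hA[OF R0 R1 F1 F2 ab _ cc two] by blast
    next
      assume "b = -c" then show ?thesis using hB[OF R0 R1 F1 F2 ab _ cc two] by blast
    qed
  next
    assume mt: "m = 4*t+3"
    have md1: "(m+2) mod 4 = 1" by (rule mod4I[of _ "t+1"]) (simp_all add: mt algebra_simps)
    have md2: "(m-1) mod 4 = 2" by (rule mod4I[of _ "t"]) (simp_all add: mt algebra_simps)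
    have md3: "(m+1) mod 4 = 0" by (rule mod4I[of _ "t+1"]) (simp_all add: mt algebra_simps)
    have md4: "(m) mod 4 = 3" by (rule mod4I[of _ "t"]) (simp_all add: mt algebra_simps)
    have "v$(m+2) = v$1" "v$(m-1) = v$2" "v$(m+1) = v$0" "v$m = v$3"
      using kb(3)[of "m+2"] kb(3)[of "m-1"] kb(3)[of "m+1"] kb(3)[of m] md1 md2 md3 md4 m1 by simp_all
    then have F1: "b * v$1 + v$2 + v$0 + v$1 = 0" and F2: "a * v$0 + v$3 + v$0 + v$1 = 0"
      using G1 G2 by simp_all
    show ?thesis using bc
    proof
      assume "b = c" then show ?thesis using hC[OF R0 R1 F1 F2 ab _ cc two] by blast
    next
      assume "b = -c" then show ?thesis using hD[OF R0 R1 F1 F2 ab _ cc two] by blast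
    qed
  qed
  have all0: "v$k = 0" if k: "k < m+3" for k
  proof -
    have "k mod 4 < 4" by simp
    then have cs: "k mod 4 = 0 \<or> k mod 4 = 1 \<or> k mod 4 = 2 \<or> k mod 4 = 3" by (rule lt4)
    have "v$2 = 0" "v$3 = 0" using pr R0 R1 by simp_all
    then have "v$(k mod 4) = 0" using cs pr by auto
    then show ?thesis using kb(3)[of k] k by simp
  qed
  have "v = 0\<^sub>v (m+3)"
    by (rule eq_vecI) (use dv all0 in auto)
  then show False using v(2) by simp
qed

theorem mainTheorem1:
  fixes n :: nat and a b c :: "'a::field"
  assumes "n \<ge> 3"
    and "a \<in> {-1, 1}" and "b \<in> {-1, 1}" and "c \<in> {-1, 1}"
    and "even (vec_space.rank n (A_mat n a b c))"
  shows "a = - b"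
proof (rule ccontr)
  assume ne: "a \<noteq> - b"
  have two: "(2::'a) \<noteq> 0"
  proof
    assume "(2::'a) = 0"
    then have "(1::'a) + 1 = 0" by simp
    then have "(1::'a) = -1" by (simp add: eq_neg_iff_add_eq_0)
    then show False using ne assms(2,3) by auto
  qed
  have ab: "a = b" using ne assms(2,3) by auto
  have aa: "a*a = 1" using assms(2) by auto
  have cc: "c*c = 1" using assms(4) by auto
  have bc: "b = c \<or> b = -c" using assms(3,4) by auto
  obtain m where n: "n = m+3" using assms(1) by (metis add.commute le_iff_add)
  have car: "A_mat n a b c \<in> carrier_mat n n" by (rule A_carrier)
  show False
  proof (cases "even m")
    case True
    have "det (A_mat n a b c) \<noteq> 0"
    proof
      assume d0: "det (A_mat n a b c) = 0"
      have "\<exists>w. w \<in> carrier_vec n \<and> w \<noteq> 0\<^sub>v n \<and> A_mat n a b c *\<^sub>v w = 0\<^sub>v n"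
        using det_0_iff_vec_prod_zero_field[OF car] d0 by (rule iffD1)
      then obtain v where v: "v \<in> carrier_vec n" "v \<noteq> 0\<^sub>v n" "A_mat n a b c *\<^sub>v v = 0\<^sub>v n"
        by blast
      have "v = 0\<^sub>v (m+3)" using odd_kernel[OF True ab aa cc two, of v] v n by simp
      then show False using v(2) n by simp
    qed
    then have "vec_space.rank n (A_mat n a b c) = n" using vec_space.det_rank_iff[OF car] by simp
    then show False using assms(5) True n by simp
  next
    case False
    have d0: "det (A_mat n a b c) = 0" using even_det_zero[OF False ab bc cc] n by simp
    have lt: "vec_space.rank n (A_mat n a b c) < n" using vec_space.det_zero_low_rank[OF car d0] .
    have Ecar: "Emat m \<in> carrier_mat n n" using Emat_carrier n by simp
    have "det (A_mat n a b c + Emat m) \<noteq> 0" using even_pert[OF False ab bc cc two] n by simp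
    moreover have "A_mat n a b c + Emat m \<in> carrier_mat n n" using Ecar by (rule add_carrier_mat)
    ultimately have fr: "vec_space.rank n (A_mat n a b c + Emat m) = n" using vec_space.det_rank_iff by blast
    have sub: "vec_space.rank n (A_mat n a b c + Emat m) \<le> vec_space.rank n (A_mat n a b c) + vec_space.rank n (Emat m :: 'a mat)"
      using vec_space.rank_subadditive[OF car Ecar] .
    have r1: "vec_space.rank n (Emat m :: 'a mat) \<le> 1"
      by (rule vec_space.rank_le_1_product_entries[OF Ecar, of "\<lambda>i. if i = m+1 \<or> i = m+2 then 1 else 0" "\<lambda>j. if j = 0 \<or> j = 1 then 1 else 0"])
        (auto simp: Emat_def)
    have "vec_space.rank n (A_mat n a b c) = m + 2" using fr sub r1 lt n by linarith
    then show False using assms(5) False by simp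
  qed
qed

end
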